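(* Let $n\ge1$, $\delta>0$, and $\hat r\in\mathbb R^n$ with $\hat r_1>\hat r_2>\cdots>\hat r_n$. Let $t_i=\phi(\hat r_i)$, $i=1,\dots,n$, for some increasing function $\phi:\mathbb R\to\mathbb R$. Let $$\pi^{\mathrm{DRO}}(\delta)\in\arg\max_{\pi\in\Delta_n}\{\langle\pi,\hat r\rangle-\delta\|\pi\|_\infty\},\qquad \pi^{\mathrm{DRRO}}(\delta)\in\arg\max_{\pi\in\Delta_n}\{\langle\pi,\hat r\rangle-\max_i(\hat r_i-\delta\pi_i)\}.$$ Then $\sum_{i=1}^n\pi_i^{\mathrm{DRRO}}(\delta)\,t_i\ge\sum_{i=1}^n\pi_i^{\mathrm{DRO}}(\delta)\,t_i$. If $\phi$ is strictly increasing and the two optimizers differ, the inequality is strict.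
   Context: $\Delta_n$ is the probability simplex in $\mathbb R^n$; $\|\pi\|_\infty=\max_i|\pi_i|$. The first problem is the promptwise distributionally robust (worst-case value) problem under $\ell_1$ reward ambiguity of radius $\delta$; the second is equivalent to the promptwise worst-case regret problem under the same ambiguity. *)

theory Defs
  imports Complex_Main
begin

(* Vectors in R^n are functions nat => real; coordinate i (1-based in the paper)
   is index i-1 here, i.e. indices range over {..<n}. *)

definition simplex :: "nat \<Rightarrow> (nat \<Rightarrow> real) set" where
  "simplex n = {p. (\<forall>i<n. 0 \<le> p i) \<and> (\<forall>i\<ge>n. p i = 0) \<and> (\<Sum>i<n. p i) = 1}"

definition inner_n :: "nat \<Rightarrow> (nat \<Rightarrow> real) \<Rightarrow> (nat \<Rightarrow> real) \<Rightarrow> real" where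
  "inner_n n p r = (\<Sum>i<n. p i * r i)"

definition linf_norm :: "nat \<Rightarrow> (nat \<Rightarrow> real) \<Rightarrow> real" where
  "linf_norm n p = Max ((\<lambda>i. \<bar>p i\<bar>) ` {..<n})"

definition dro_obj :: "nat \<Rightarrow> real \<Rightarrow> (nat \<Rightarrow> real) \<Rightarrow> (nat \<Rightarrow> real) \<Rightarrow> real" where
  "dro_obj n \<delta> r p = inner_n n p r - \<delta> * linf_norm n p"

definition drro_obj :: "nat \<Rightarrow> real \<Rightarrow> (nat \<Rightarrow> real) \<Rightarrow> (nat \<Rightarrow> real) \<Rightarrow> real" where
  "drro_obj n \<delta> r p = inner_n n p r - Max ((\<lambda>i. r i - \<delta> * p i) ` {..<n})"

definition is_argmax_on :: "('a \<Rightarrow> real) \<Rightarrow> 'a set \<Rightarrow> 'a \<Rightarrow> bool" where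
  "is_argmax_on f S x \<longleftrightarrow> x \<in> S \<and> (\<forall>y\<in>S. f y \<le> f x)"

end

theory Submission
  imports Defs
begin

lemma pert_sum: "a < (n::nat) \<Longrightarrow> b < n \<Longrightarrow> (\<Sum>l<n. (p l + (if l = a then e else 0) - (if l = b then e else 0)) * (w l::real)) = (\<Sum>l<n. p l * w l) + e * w a - e * w b"
proof -
  assume "a < n" "b < n"
  have 1: "(\<Sum>l<n. (if l = a then e else 0) * w l) = e * w a" using \<open>a < n\<close>
    by (simp add: if_distrib[of "\<lambda>x. x * _"] cong: if_cong)
  have 2: "(\<Sum>l<n. (if l = b then e else 0) * w l) = e * w b" using \<open>b < n\<close>
    by (simp add: if_distrib[of "\<lambda>x. x * _"] cong: if_cong)
  have "(\<Sum>l<n. (p l + (if l = a then e else 0) - (if l = b then e else 0)) * (w l::real))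
     = (\<Sum>l<n. p l * w l) + (\<Sum>l<n. (if l = a then e else 0) * w l) - (\<Sum>l<n. (if l = b then e else 0) * w l)"
    by (simp only: ring_distribs sum.distrib sum_subtractf)
  then show ?thesis using 1 2 by simp
qed

lemma pert_sum1: "a < (n::nat) \<Longrightarrow> b < n \<Longrightarrow> (\<Sum>l<n. (p l + (if l = a then e else 0) - (if l = b then e else 0))) = (\<Sum>l<n. p l::real)"
  using pert_sum[of a n b p e "\<lambda>_. 1"] by simp

lemma Max_img_ge: "i < (n::nat) \<Longrightarrow> (f i::real) \<le> Max (f ` {..<n})"
  by (intro Max_ge) auto

lemma Max_img_le: "(n::nat) \<ge> 1 \<Longrightarrow> (\<And>i. i < n \<Longrightarrow> (f i::real) \<le> b) \<Longrightarrow> Max (f ` {..<n}) \<le> b"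
proof -
  assume "n \<ge> 1" and h: "\<And>i. i < n \<Longrightarrow> (f i::real) \<le> b"
  then have "0 \<in> {..<n}" by simp
  then have "{..<n} \<noteq> {}" by blast
  then show ?thesis using h by (subst Max_le_iff) auto
qed

definition gap :: "(nat \<Rightarrow> real) \<Rightarrow> nat \<Rightarrow> real" where
  "gap r m = (\<Sum>i<m. r i - r m)"

lemma last_pos:
  assumes "p \<in> simplex n"
  shows "\<exists>J<n. p J > 0 \<and> (\<forall>j. J < j \<longrightarrow> j < n \<longrightarrow> p j = 0)"
proof -
  have nn: "\<And>l. l<n \<Longrightarrow> 0 \<le> p l" and s1: "(\<Sum>l<n. p l) = 1"
    using assms by (auto simp: simplex_def)
  define S where "S = {j. j < n \<and> p j > 0}"
  have fin: "finite S" unfolding S_def by auto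
  have ne: "S \<noteq> {}"
  proof
    assume "S = {}"
    then have "\<And>l. l < n \<Longrightarrow> p l = 0" using nn unfolding S_def by force
    then have "(\<Sum>l<n. p l) = 0" by simp
    with s1 show False by simp
  qed
  define J where "J = Max S"
  have JS: "J \<in> S" unfolding J_def using fin ne by (rule Max_in)
  have "\<forall>j. J < j \<longrightarrow> j < n \<longrightarrow> p j = 0"
  proof (intro allI impI)
    fix j assume "J < j" "j < n"
    have "j \<notin> S"
    proof
      assume "j \<in> S" then have "j \<le> J" unfolding J_def using fin by simp
      with \<open>J < j\<close> show False by simp
    qed
    then show "p j = 0" using nn[OF \<open>j<n\<close>] \<open>j<n\<close> unfolding S_def by auto
  qed
  then show ?thesis using JS unfolding S_def by auto
qed

lemma avg_noninc:
  fixes p :: "nat \<Rightarrow> real"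
  assumes dec: "\<And>i j. i < j \<Longrightarrow> j < k \<Longrightarrow> p j \<le> p i" and mk: "m \<le> k"
  shows "real m * (\<Sum>i<k. p i) \<le> real k * (\<Sum>i<m. p i)"
proof (cases "m = 0")
  case True then show ?thesis by simp
next
  case False
  define a where "a = p (m - 1)"
  define S1 where "S1 = (\<Sum>i<m. p i)"
  define S2 where "S2 = (\<Sum>i\<in>{m..<k}. p i)"
  have split: "(\<Sum>i<k. p i) = S1 + S2"
    unfolding S1_def S2_def using sum.atLeastLessThan_concat[of 0 m k p] mk
    by (simp add: atLeast0LessThan)
  have h1: "S2 \<le> real (k - m) * a"
  proof -
    have "S2 \<le> of_nat (card {m..<k}) * a" unfolding S2_def
      by (rule sum_bounded_above) (use False dec in \<open>auto simp: a_def\<close>)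
    then show ?thesis by simp
  qed
  have h2: "real m * a \<le> S1"
  proof -
    have "of_nat (card {..<m}) * a \<le> S1" unfolding S1_def
    proof (rule sum_bounded_below)
      fix i assume "i \<in> {..<m}"
      then have "i < m" by simp
      show "a \<le> p i"
      proof (cases "i = m - 1")
        case True then show ?thesis by (simp add: a_def)
      next
        case False then show ?thesis unfolding a_def using \<open>i<m\<close> mk by (intro dec) auto
      qed
    qed
    then show ?thesis by simp
  qed
  have km: "real (k - m) = real k - real m" using mk by simp
  have E: "real m * (\<Sum>i<k. p i) = real m * S1 + real m * S2" by (simp add: split distrib_left)
  have X: "real m * S2 \<le> real m * (real (k - m) * a)" by (rule mult_left_mono[OF h1]) simp
  have Z: "real m * (real (k - m) * a) = real (k - m) * (real m * a)" by simp
  have Y: "real (k - m) * (real m * a) \<le> real (k - m) * S1" by (rule mult_left_mono[OF h2]) simp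
  have W: "real m * S1 + real (k - m) * S1 = real k * S1" unfolding km by (simp add: algebra_simps)
  show ?thesis unfolding S1_def[symmetric] using E X Y Z W by linarith
qed

lemma abel:
  fixes a t :: "nat \<Rightarrow> real"
  shows "(\<Sum>i<Suc N. a i * t i) = (\<Sum>i<Suc N. a i) * t N + (\<Sum>m<N. (\<Sum>i<Suc m. a i) * (t m - t (Suc m)))"
proof (induction N)
  case 0 then show ?case by simp
next
  case (Suc N)
  have "(\<Sum>i<Suc (Suc N). a i * t i) = (\<Sum>i<Suc N. a i * t i) + a (Suc N) * t (Suc N)" by simp
  also have "\<dots> = (\<Sum>i<Suc N. a i) * t N + (\<Sum>m<N. (\<Sum>i<Suc m. a i) * (t m - t (Suc m))) + a (Suc N) * t (Suc N)"
    using Suc by simp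
  also have "\<dots> = (\<Sum>i<Suc (Suc N). a i) * t (Suc N) + (\<Sum>m<Suc N. (\<Sum>i<Suc m. a i) * (t m - t (Suc m)))"
    by (simp add: algebra_simps)
  finally show ?case .
qed

locale drctx =
  fixes n :: nat and \<delta> :: real and r :: "nat \<Rightarrow> real"
  assumes n1: "n \<ge> 1" and dpos: "\<delta> > 0"
    and rdec: "\<And>i j. i < j \<Longrightarrow> j < n \<Longrightarrow> r i > r j"
begin

lemma gap_mono:
  assumes "a \<le> b" "b < n" shows "gap r a \<le> gap r b"
proof -
  have "r b \<le> r a" using assms rdec[of a b] by (cases "a = b") auto
  then have "gap r a \<le> (\<Sum>i<a. r i - r b)" unfolding gap_def by (intro sum_mono) auto
  also have "\<dots> \<le> (\<Sum>i<b. r i - r b)"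
    by (rule sum_mono2) (use assms rdec in \<open>auto intro: less_imp_le\<close>)
  finally show ?thesis unfolding gap_def .
qed

lemma dro_A1:
  assumes opt: "is_argmax_on (dro_obj n \<delta> r) (simplex n) p"
    and ij: "i < j" "j < n" "p j > 0"
  shows "p i = linf_norm n p"
proof -
  define M where "M = linf_norm n p"
  from opt have ps: "p \<in> simplex n"
    and best: "\<And>q. q \<in> simplex n \<Longrightarrow> dro_obj n \<delta> r q \<le> dro_obj n \<delta> r p"
    by (auto simp: is_argmax_on_def)
  have nn: "\<And>l. l<n \<Longrightarrow> 0 \<le> p l" and zz: "\<And>l. l \<ge> n \<Longrightarrow> p l = 0"
    and s1: "(\<Sum>l<n. p l) = 1"
    using ps by (auto simp: simplex_def)
  have pleM: "p l \<le> M" if "l < n" for l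
  proof -
    have "\<bar>p l\<bar> \<le> M" unfolding M_def linf_norm_def by (rule Max_img_ge[OF that])
    then show ?thesis by simp
  qed
  show ?thesis
  proof (rule ccontr)
    assume "p i \<noteq> linf_norm n p"
    then have lt: "p i < M" using pleM[of i] ij unfolding M_def by auto
    define e where "e = min (p j) (M - p i)"
    have e0: "e > 0" using lt ij unfolding e_def by auto
    define q where "q = (\<lambda>l. p l + (if l = i then e else 0) - (if l = j then e else 0))"
    have in_: "i < n" using ij by simp
    have qs: "q \<in> simplex n"
      unfolding simplex_def
    proof (intro CollectI conjI allI impI)
      fix l assume "l < n"
      then show "0 \<le> q l" unfolding q_def e_def using nn[of l] nn[of i] ij lt
        by (auto simp: min_def)
    next
      fix l assume "n \<le> l"
      then show "q l = 0" unfolding q_def using zz[of l] ij by auto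
    next
      show "(\<Sum>l<n. q l) = 1" unfolding q_def using pert_sum1[OF in_ ij(2)] s1 by simp
    qed
    have "linf_norm n q \<le> M" unfolding linf_norm_def
    proof (rule Max_img_le[OF n1])
      fix l assume "l < n"
      then show "\<bar>q l\<bar> \<le> M" unfolding q_def e_def using nn[of l] pleM[of l] nn[of i] ij lt
        by (auto simp: min_def)
    qed
    moreover have "inner_n n q r = inner_n n p r + e * r i - e * r j"
      unfolding inner_n_def q_def by (rule pert_sum[OF in_ ij(2)])
    moreover have "e * r i - e * r j > 0"
      using e0 rdec[OF ij(1,2)] by (simp add: right_diff_distrib[symmetric])
    moreover have "\<delta> * linf_norm n q \<le> \<delta> * M"
      by (rule mult_left_mono) (use calculation(1) dpos in auto)
    ultimately have "dro_obj n \<delta> r q > dro_obj n \<delta> r p"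
      unfolding dro_obj_def M_def by linarith
    with best[OF qs] show False by simp
  qed
qed

lemma dro_unif:
  assumes opt: "is_argmax_on (dro_obj n \<delta> r) (simplex n) p"
    and mn: "m < n"
    and below: "\<And>i. i < m \<Longrightarrow> p i = linf_norm n p"
    and above: "\<And>j. m < j \<Longrightarrow> j < n \<Longrightarrow> p j = 0"
    and pm: "p m < linf_norm n p"
    and gm: "gap r m < \<delta>"
  shows False
proof -
  define M where "M = linf_norm n p"
  from opt have ps: "p \<in> simplex n"
    and best: "\<And>q. q \<in> simplex n \<Longrightarrow> dro_obj n \<delta> r q \<le> dro_obj n \<delta> r p"
    by (auto simp: is_argmax_on_def)
  have nn: "\<And>l. l<n \<Longrightarrow> 0 \<le> p l" and zz: "\<And>l. l \<ge> n \<Longrightarrow> p l = 0"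
    and s1: "(\<Sum>l<n. p l) = 1"
    using ps by (auto simp: simplex_def)
  have sub: "{..<Suc m} \<subseteq> {..<n}" using mn by auto
  have split: "(\<Sum>l<n. f l) = (\<Sum>l<Suc m. f l)" if "\<And>j. m < j \<Longrightarrow> j < n \<Longrightarrow> f j = 0" for f :: "nat \<Rightarrow> real"
    by (rule sum.mono_neutral_right) (use sub that in auto)
  have "(\<Sum>l<n. p l) = (\<Sum>l<Suc m. p l)" by (rule split) (simp add: above)
  also have "\<dots> = (\<Sum>l<m. M) + p m" using below unfolding M_def by simp
  finally have eq1: "real m * M + p m = 1" using s1 by simp
  define R where "R = (\<Sum>i<m. r i)"
  have gapR: "gap r m = R - real m * r m" unfolding gap_def R_def by (simp add: sum_subtractf)
  have "inner_n n p r = (\<Sum>l<Suc m. p l * r l)" unfolding inner_n_def by (rule split) (simp add: above)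
  also have "\<dots> = (\<Sum>l<m. M * r l) + p m * r m" using below unfolding M_def by simp
  also have "\<dots> = M * R + p m * r m" unfolding R_def by (simp add: sum_distrib_left)
  finally have ip: "inner_n n p r = M * R + p m * r m" .
  define u where "u = (\<lambda>l. if l < Suc m then 1 / (real m + 1) else 0)"
  have us: "u \<in> simplex n" unfolding simplex_def
  proof (intro CollectI conjI allI impI)
    fix l show "0 \<le> u l" if "l < n" unfolding u_def by simp
  next
    fix l assume "n \<le> l" then show "u l = 0" unfolding u_def using mn by auto
  next
    have "(\<Sum>l<n. u l) = (\<Sum>l<Suc m. u l)" by (rule split) (simp add: u_def)
    also have "\<dots> = 1" unfolding u_def by simp
    finally show "(\<Sum>l<n. u l) = 1" .
  qed
  have "linf_norm n u \<le> 1 / (real m + 1)" unfolding linf_norm_def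
    by (rule Max_img_le[OF n1]) (simp add: u_def)
  moreover have "inner_n n u r = (R + r m) / (real m + 1)"
  proof -
    have "inner_n n u r = (\<Sum>l<Suc m. u l * r l)" unfolding inner_n_def by (rule split) (simp add: u_def)
    also have "\<dots> = (\<Sum>l<Suc m. r l / (real m + 1))" by (rule sum.cong) (auto simp: u_def)
    also have "\<dots> = (\<Sum>l<Suc m. r l) / (real m + 1)" by (rule sum_divide_distrib[symmetric])
    also have "\<dots> = (R + r m) / (real m + 1)" unfolding R_def by simp
    finally show ?thesis .
  qed
  moreover have "\<delta> * linf_norm n u \<le> \<delta> * (1 / (real m + 1))"
    by (rule mult_left_mono) (use calculation(1) dpos in auto)
  ultimately have ou: "dro_obj n \<delta> r u \<ge> (R + r m) / (real m + 1) - \<delta> / (real m + 1)"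
    unfolding dro_obj_def by simp
  have op: "dro_obj n \<delta> r p = M * R + p m * r m - \<delta> * M" unfolding dro_obj_def ip M_def by simp
  have Mbig: "(real m + 1) * M > 1" using eq1 pm unfolding M_def by (simp add: algebra_simps)
  have key: "(real m + 1) * M * (gap r m - \<delta>) < 1 * (gap r m - \<delta>)"
    by (rule mult_strict_right_mono_neg[OF Mbig]) (use gm in simp)
  have pm': "p m = 1 - real m * M" using eq1 by simp
  have "(real m + 1) * dro_obj n \<delta> r p = (real m + 1) * M * (gap r m - \<delta>) + (real m + 1) * r m"
    unfolding op gapR pm' by (simp add: algebra_simps)
  also have "\<dots> < (gap r m - \<delta>) + (real m + 1) * r m" using key by simp
  also have "\<dots> = R + r m - \<delta>" unfolding gapR by (simp add: algebra_simps)
  also have "\<dots> = (real m + 1) * ((R + r m) / (real m + 1) - \<delta> / (real m + 1))"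
  proof -
    have nz: "real m + 1 \<noteq> 0" by simp
    have "(R + r m) / (real m + 1) - \<delta> / (real m + 1) = (R + r m - \<delta>) / (real m + 1)"
      by (rule diff_divide_distrib[symmetric])
    then show ?thesis using nz by simp
  qed
  also have "\<dots> \<le> (real m + 1) * dro_obj n \<delta> r u" using ou by simp
  finally have "dro_obj n \<delta> r p < dro_obj n \<delta> r u" by simp
  with best[OF us] show False by simp
qed

lemma dro_bound:
  assumes opt: "is_argmax_on (dro_obj n \<delta> r) (simplex n) p"
    and mn: "m < n" and gm: "gap r m < \<delta>"
  shows "(real m + 1) * linf_norm n p \<le> 1"
proof -
  define M where "M = linf_norm n p"
  from opt have ps: "p \<in> simplex n" by (auto simp: is_argmax_on_def)
  have nn: "\<And>l. l<n \<Longrightarrow> 0 \<le> p l" and s1: "(\<Sum>l<n. p l) = 1"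
    using ps by (auto simp: simplex_def)
  have pleM: "p l \<le> M" if "l < n" for l
  proof -
    have "\<bar>p l\<bar> \<le> M" unfolding M_def linf_norm_def by (rule Max_img_ge[OF that])
    then show ?thesis by simp
  qed
  obtain J where J: "J < n" "p J > 0" and Jz: "\<And>j. J < j \<Longrightarrow> j < n \<Longrightarrow> p j = 0"
    using last_pos[OF ps] by blast
  have below: "\<And>i. i < J \<Longrightarrow> p i = M" unfolding M_def using dro_A1[OF opt _ J] by blast
  have sub: "{..<Suc J} \<subseteq> {..<n}" using J by auto
  have "(\<Sum>l<n. p l) = (\<Sum>l<Suc J. p l)"
    by (rule sum.mono_neutral_right) (use sub Jz in auto)
  also have "\<dots> = (\<Sum>l<J. M) + p J" using below by simp
  finally have eq1: "real J * M + p J = 1" using s1 by simp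
  have M0: "M > 0" using pleM[OF J(1)] J by simp
  show ?thesis
  proof (cases "m < J")
    case True
    then have "(real m + 1) * M \<le> real J * M" using M0 by (intro mult_right_mono) auto
    then show ?thesis using eq1 J unfolding M_def by simp
  next
    case False
    have gJ: "gap r J < \<delta>" using gap_mono[of J m] False mn gm by simp
    have pJ: "p J = M"
    proof (rule ccontr)
      assume "p J \<noteq> M" then have "p J < M" using pleM[OF J(1)] by simp
      then show False using dro_unif[OF opt J(1) _ Jz _ gJ] below unfolding M_def by blast
    qed
    show ?thesis
    proof (cases "m = J")
      case True then show ?thesis using eq1 pJ unfolding M_def by (simp add: algebra_simps)
    next
      case False
      with \<open>\<not> m < J\<close> have Jm: "J < m" by simp
      have gJ1: "gap r (Suc J) < \<delta>" using gap_mono[of "Suc J" m] Jm mn gm by simp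
      have "Suc J < n" using Jm mn by simp
      show ?thesis
      proof (rule ccontr)
        assume "\<not> ?thesis"
        have b2: "\<And>i. i < Suc J \<Longrightarrow> p i = linf_norm n p"
          using below pJ unfolding M_def by (metis less_Suc_eq)
        have a2: "\<And>j. Suc J < j \<Longrightarrow> j < n \<Longrightarrow> p j = 0" using Jz by simp
        have "p (Suc J) < linf_norm n p" using Jz[of "Suc J"] \<open>Suc J < n\<close> M0 unfolding M_def by simp
        then show False using dro_unif[OF opt \<open>Suc J < n\<close> b2 a2 _ gJ1] by blast
      qed
    qed
  qed
qed

lemma drro_B1:
  assumes opt: "is_argmax_on (drro_obj n \<delta> r) (simplex n) p"
    and i: "i \<noteq> 0" "i < n" "p i > 0"
  shows "r i - \<delta> * p i = Max ((\<lambda>l. r l - \<delta> * p l) ` {..<n})"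
proof -
  define c where "c = Max ((\<lambda>l. r l - \<delta> * p l) ` {..<n})"
  from opt have ps: "p \<in> simplex n"
    and best: "\<And>q. q \<in> simplex n \<Longrightarrow> drro_obj n \<delta> r q \<le> drro_obj n \<delta> r p"
    by (auto simp: is_argmax_on_def)
  have nn: "\<And>l. l<n \<Longrightarrow> 0 \<le> p l" and zz: "\<And>l. l \<ge> n \<Longrightarrow> p l = 0"
    and s1: "(\<Sum>l<n. p l) = 1"
    using ps by (auto simp: simplex_def)
  have cge: "r l - \<delta> * p l \<le> c" if "l < n" for l
    unfolding c_def by (rule Max_img_ge[OF that])
  have n0: "0 < n" using n1 by simp
  show ?thesis unfolding c_def[symmetric]
  proof (rule ccontr)
    assume "r i - \<delta> * p i \<noteq> c"
    then have lt: "r i - \<delta> * p i < c" using cge[OF i(2)] by simp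
    define e where "e = min (p i) ((c - (r i - \<delta> * p i)) / \<delta>)"
    have e0: "e > 0" using lt i dpos unfolding e_def by auto
    have de: "\<delta> * e \<le> c - (r i - \<delta> * p i)"
    proof -
      have "e \<le> (c - (r i - \<delta> * p i)) / \<delta>" unfolding e_def by simp
      then show ?thesis using dpos by (simp add: pos_le_divide_eq mult.commute)
    qed
    define q where "q = (\<lambda>l. p l + (if l = 0 then e else 0) - (if l = i then e else 0))"
    have qs: "q \<in> simplex n"
      unfolding simplex_def
    proof (intro CollectI conjI allI impI)
      fix l assume "l < n"
      then show "0 \<le> q l" unfolding q_def e_def using nn[of l] nn[of 0] i n0 lt dpos
        by (auto simp: min_def)
    next
      fix l assume "n \<le> l"
      then show "q l = 0" unfolding q_def using zz[of l] i by auto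
    next
      show "(\<Sum>l<n. q l) = 1" unfolding q_def using pert_sum1[OF n0 i(2)] s1 by simp
    qed
    have "Max ((\<lambda>l. r l - \<delta> * q l) ` {..<n}) \<le> c"
    proof (rule Max_img_le[OF n1])
      fix l assume l: "l < n"
      show "r l - \<delta> * q l \<le> c"
      proof (cases "l = 0")
        case True
        then have "q l = p 0 + e" unfolding q_def using i by simp
        moreover have "\<delta> * e > 0" using e0 dpos by simp
        ultimately show ?thesis using cge[of 0] n0 True
          by (simp add: distrib_left)
      next
        case False
        show ?thesis
        proof (cases "l = i")
          case True
          then have "q l = p i - e" unfolding q_def using i by simp
          then show ?thesis using True de by (simp add: right_diff_distrib)
        next
          case False
          then have "q l = p l" unfolding q_def using \<open>l \<noteq> 0\<close> by simp
          then show ?thesis using cge[OF l] by simp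
        qed
      qed
    qed
    moreover have "inner_n n q r = inner_n n p r + e * r 0 - e * r i"
      unfolding inner_n_def q_def by (rule pert_sum[OF n0 i(2)])
    moreover have "e * r 0 - e * r i > 0"
      using e0 rdec[of 0 i] i by (simp add: right_diff_distrib[symmetric])
    ultimately have "drro_obj n \<delta> r q > drro_obj n \<delta> r p"
      unfolding drro_obj_def c_def by linarith
    with best[OF qs] show False by simp
  qed
qed

lemma drro_B2:
  assumes opt: "is_argmax_on (drro_obj n \<delta> r) (simplex n) p"
    and ij: "i < j" "j < n"
  shows "p j \<le> p i"
proof -
  define c where "c = Max ((\<lambda>l. r l - \<delta> * p l) ` {..<n})"
  from opt have ps: "p \<in> simplex n" by (auto simp: is_argmax_on_def)
  have nn: "\<And>l. l<n \<Longrightarrow> 0 \<le> p l" using ps by (auto simp: simplex_def)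
  show ?thesis
  proof (cases "p j > 0")
    case False then show ?thesis using nn[of i] nn[of j] ij by simp
  next
    case True
    have cj: "r j - \<delta> * p j = c" unfolding c_def by (rule drro_B1[OF opt _ ij(2) True]) (use ij in simp)
    have "r i - \<delta> * p i \<le> c" unfolding c_def by (rule Max_img_ge) (use ij in simp)
    with cj rdec[OF ij] have "\<delta> * p j < \<delta> * p i" by simp
    then show ?thesis using dpos by simp
  qed
qed

lemma drro_B3:
  assumes opt: "is_argmax_on (drro_obj n \<delta> r) (simplex n) p"
    and j: "j < n" "p j > 0"
  shows "gap r j < \<delta>"
proof (cases "j = 0")
  case True then show ?thesis using dpos by (simp add: gap_def)
next
  case False
  define c where "c = Max ((\<lambda>l. r l - \<delta> * p l) ` {..<n})"
  from opt have ps: "p \<in> simplex n" by (auto simp: is_argmax_on_def)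
  have nn: "\<And>l. l<n \<Longrightarrow> 0 \<le> p l" and s1: "(\<Sum>l<n. p l) = 1"
    using ps by (auto simp: simplex_def)
  have cj: "r j - \<delta> * p j = c" unfolding c_def by (rule drro_B1[OF opt False j])
  have cge: "r l - c \<le> \<delta> * p l" if "l < n" for l
    using Max_img_ge[OF that, of "\<lambda>l. r l - \<delta> * p l"] unfolding c_def by simp
  have "(\<Sum>l<Suc j. r l - c) \<le> (\<Sum>l<Suc j. \<delta> * p l)"
    by (rule sum_mono) (use cge j in simp)
  also have "\<dots> = \<delta> * (\<Sum>l<Suc j. p l)" by (simp only: sum_distrib_left)
  also have "(\<Sum>l<Suc j. p l) \<le> (\<Sum>l<n. p l)"
    by (rule sum_mono2) (use j nn in auto)
  then have "\<delta> * (\<Sum>l<Suc j. p l) \<le> \<delta>" using s1 dpos by simp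
  finally have A: "(\<Sum>l<Suc j. r l - c) \<le> \<delta>" .
  have B: "(\<Sum>l<Suc j. r l - c) = (\<Sum>l<j. r l) - real j * c + (r j - c)"
  proof -
    have "(\<Sum>l<Suc j. r l - c) = (\<Sum>l<Suc j. r l) - real (Suc j) * c" by (simp only: sum_subtractf sum_constant card_lessThan)
    moreover have "real (Suc j) * c = real j * c + c" by (simp add: distrib_right)
    moreover have "(\<Sum>l<Suc j. r l) = (\<Sum>l<j. r l) + r j" by simp
    ultimately show ?thesis by simp
  qed
  have G: "gap r j = (\<Sum>l<j. r l) - real j * r j" unfolding gap_def by (simp add: sum_subtractf)
  have C: "real j * c = real j * r j - real j * (\<delta> * p j)" using cj by (simp add: algebra_simps)
  have D: "real j * (\<delta> * p j) \<ge> 0" using dpos j by simp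
  have E: "\<delta> * p j > 0" using dpos j by simp
  show ?thesis using A B G C D E cj by linarith
qed

end


theorem mainTheorem12:
  fixes n :: nat and \<delta> :: real and r :: "nat \<Rightarrow> real" and \<phi> :: "real \<Rightarrow> real"
    and pDRO pDRRO :: "nat \<Rightarrow> real"
  assumes "n \<ge> 1" and "\<delta> > 0"
    and "\<And>i j. i < j \<Longrightarrow> j < n \<Longrightarrow> r i > r j"
    and "mono \<phi>"
    and "is_argmax_on (dro_obj n \<delta> r) (simplex n) pDRO"
    and "is_argmax_on (drro_obj n \<delta> r) (simplex n) pDRRO"
  shows "(\<Sum>i<n. pDRRO i * \<phi> (r i)) \<ge> (\<Sum>i<n. pDRO i * \<phi> (r i))
         \<and> (strict_mono \<phi> \<longrightarrow> pDRRO \<noteq> pDRO \<longrightarrow>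
           (\<Sum>i<n. pDRRO i * \<phi> (r i)) > (\<Sum>i<n. pDRO i * \<phi> (r i)))"
proof -
  interpret drctx n \<delta> r using assms(1-3) by unfold_locales auto
  note optD = assms(5) and optR = assms(6)
  have psD: "pDRO \<in> simplex n" using optD by (auto simp: is_argmax_on_def)
  have psR: "pDRRO \<in> simplex n" using optR by (auto simp: is_argmax_on_def)
  have nD: "\<And>l. l<n \<Longrightarrow> 0 \<le> pDRO l" and zD: "\<And>l. l \<ge> n \<Longrightarrow> pDRO l = 0"
    and sD: "(\<Sum>l<n. pDRO l) = 1" using psD by (auto simp: simplex_def)
  have nR: "\<And>l. l<n \<Longrightarrow> 0 \<le> pDRRO l" and zR: "\<And>l. l \<ge> n \<Longrightarrow> pDRRO l = 0"
    and sR: "(\<Sum>l<n. pDRRO l) = 1" using psR by (auto simp: simplex_def)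
  define M where "M = linf_norm n pDRO"
  have pleM: "pDRO l \<le> M" if "l < n" for l
  proof -
    have "\<bar>pDRO l\<bar> \<le> M" unfolding M_def linf_norm_def by (rule Max_img_ge[OF that])
    then show ?thesis by simp
  qed
  obtain J where J: "J < n" "pDRRO J > 0" and Jz: "\<And>j. J < j \<Longrightarrow> j < n \<Longrightarrow> pDRRO j = 0"
    using last_pos[OF psR] by blast
  define k where "k = Suc J"
  have kn: "k \<le> n" using J unfolding k_def by simp
  have kM: "real k * M \<le> 1"
    using dro_bound[OF optD J(1) drro_B3[OF optR J]] unfolding k_def M_def by (simp add: add.commute)
  have SR1: "(\<Sum>i<m. pDRRO i) = 1" if "k \<le> m" "m \<le> n" for m
  proof -
    have "(\<Sum>i<m. pDRRO i) = (\<Sum>i<n. pDRRO i)"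
      by (rule sum.mono_neutral_left) (use that Jz in \<open>auto simp: k_def\<close>)
    then show ?thesis using sR by simp
  qed
  have dom: "(\<Sum>i<m. pDRO i) \<le> (\<Sum>i<m. pDRRO i)" if mn: "m \<le> n" for m
  proof -
    have SDle: "(\<Sum>i<m. pDRO i) \<le> real m * M"
    proof -
      have "(\<Sum>i<m. pDRO i) \<le> of_nat (card {..<m}) * M"
        by (rule sum_bounded_above) (use pleM mn in auto)
      then show ?thesis by simp
    qed
    show ?thesis
    proof (cases "k \<le> m")
      case True
      have "(\<Sum>i<m. pDRO i) \<le> (\<Sum>i<n. pDRO i)"
        by (rule sum_mono2) (use mn nD in auto)
      then show ?thesis using SR1[OF True mn] sD by simp
    next
      case False
      have "real m * (\<Sum>i<k. pDRRO i) \<le> real k * (\<Sum>i<m. pDRRO i)"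
        by (rule avg_noninc) (use drro_B2[OF optR] kn False in auto)
      then have A: "real m \<le> real k * (\<Sum>i<m. pDRRO i)" using SR1[OF order.refl kn] by simp
      have "real k * (real m * M) = real m * (real k * M)" by simp
      also have "\<dots> \<le> real m * 1" by (rule mult_left_mono[OF kM]) simp
      finally have "real k * (real m * M) \<le> real k * (\<Sum>i<m. pDRRO i)" using A by simp
      then have "real m * M \<le> (\<Sum>i<m. pDRRO i)" unfolding k_def
        by (simp add: mult_le_cancel_left_pos del: of_nat_Suc)
      then show ?thesis using SDle by simp
    qed
  qed
  define a where "a = (\<lambda>i. pDRRO i - pDRO i)"
  define t where "t = (\<lambda>i. \<phi> (r i))"
  define A where "A = (\<lambda>m. \<Sum>i<m. a i)"
  have A_eq: "A m = (\<Sum>i<m. pDRRO i) - (\<Sum>i<m. pDRO i)" for m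
    unfolding A_def a_def by (simp add: sum_subtractf)
  have A0: "A m \<ge> 0" if "m \<le> n" for m using dom[OF that] A_eq[of m] by simp
  have An: "A n = 0" using A_eq[of n] sR sD by simp
  obtain N where N: "n = Suc N" using assms(1) by (cases n) auto
  have diff: "(\<Sum>i<n. pDRRO i * \<phi> (r i)) - (\<Sum>i<n. pDRO i * \<phi> (r i)) = (\<Sum>i<n. a i * t i)"
    unfolding a_def t_def by (simp add: sum_subtractf left_diff_distrib)
  have ab: "(\<Sum>i<n. a i * t i) = (\<Sum>m<N. A (Suc m) * (t m - t (Suc m)))"
    using abel[of a t N] An unfolding N A_def by simp
  have tdec: "t (Suc m) \<le> t m" if "m < N" for m
    unfolding t_def using that N assms(3)[of m "Suc m"] assms(4)
    by (auto intro: monoD less_imp_le)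
  have terms: "A (Suc m) * (t m - t (Suc m)) \<ge> 0" if "m \<in> {..<N}" for m
    using A0[of "Suc m"] tdec[of m] that N by simp
  have part1: "(\<Sum>i<n. pDRRO i * \<phi> (r i)) \<ge> (\<Sum>i<n. pDRO i * \<phi> (r i))"
  proof -
    have "0 \<le> (\<Sum>m<N. A (Suc m) * (t m - t (Suc m)))" by (rule sum_nonneg) (use terms in auto)
    then show ?thesis using diff ab by linarith
  qed
  have part2: "(\<Sum>i<n. pDRRO i * \<phi> (r i)) > (\<Sum>i<n. pDRO i * \<phi> (r i))"
    if sm: "strict_mono \<phi>" and ne: "pDRRO \<noteq> pDRO"
  proof -
    have "\<exists>m\<le>n. A m \<noteq> 0"
    proof (rule ccontr)
      assume "\<not> ?thesis"
      then have allz: "\<And>m. m \<le> n \<Longrightarrow> A m = 0" by auto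
      have "pDRRO = pDRO"
      proof
        fix i show "pDRRO i = pDRO i"
        proof (cases "i < n")
          case True
          have "A (Suc i) = A i + a i" unfolding A_def by simp
          then have "a i = 0" using allz[of i] allz[of "Suc i"] True by simp
          then show ?thesis unfolding a_def by simp
        next
          case False then show ?thesis using zR zD by simp
        qed
      qed
      with ne show False by simp
    qed
    then obtain m where m: "m \<le> n" "A m \<noteq> 0" by blast
    have "m \<noteq> 0"
    proof
      assume "m = 0" then have "A m = 0" unfolding A_def by simp
      with m show False by simp
    qed
    then obtain m' where m': "m = Suc m'" by (cases m) auto
    have "m \<noteq> n" using m An by auto
    then have m'N: "m' < N" using m m' N by simp
    have Apos: "A (Suc m') > 0" using A0[of m] m m' by simp
    have "t (Suc m') < t m'" unfolding t_def using assms(3)[of m' "Suc m'"] m'N N sm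
      by (auto intro: strict_monoD)
    then have "A (Suc m') * (t m' - t (Suc m')) > 0" using Apos by simp
    then have "(\<Sum>m<N. A (Suc m) * (t m - t (Suc m))) > 0"
      by (intro sum_pos2[of "{..<N}" m']) (use m'N terms in auto)
    then show ?thesis using diff ab by simp
  qed
  show ?thesis using part1 part2 by blast
qed

end
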